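(* Let $q\geqslant 67$ be a prime with $q\equiv 3 \pmod{16}$. Then $$N_q>\frac{2-\log(3\sqrt{2})}{2}\cdot\frac{\lfloor\sqrt{3q/4}\rfloor}{\log q}.$$
   Context: For a prime $q$, $N_q$ denotes the number of rational primes $p\leqslant q$ that split in the imaginary quadratic field $\mathbb{Q}(\sqrt{-q})$. *)

theory Defs
  imports Complex_Main "HOL-Number_Theory.Number_Theory"
begin

text \<open>Splitting of a rational prime p in the quadratic field Q(sqrt d), d squarefree, d \<noteq> 0,1.
  The ring of integers is Z[omega] with omega = (1 + sqrt d)/2 if d = 1 mod 4 and omega = sqrt d
  otherwise; by Dedekind--Kummer (applicable since Z[omega] is the full ring of integers),
  p splits iff the minimal polynomial of omega factors mod p into two distinct linear factors,
  i.e. has two roots that are distinct mod p.\<close>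

definition omega_minpoly :: "int \<Rightarrow> int \<Rightarrow> int" where
  "omega_minpoly d x = (if d mod 4 = 1 then x^2 - x + (1 - d) div 4 else x^2 - d)"

definition splits_in_quadratic_field :: "int \<Rightarrow> nat \<Rightarrow> bool" where
  "splits_in_quadratic_field d p \<longleftrightarrow> prime p \<and>
     (\<exists>x y :: int. \<not> [x = y] (mod int p) \<and>
        [omega_minpoly d x = 0] (mod int p) \<and> [omega_minpoly d y = 0] (mod int p))"

definition N :: "nat \<Rightarrow> nat" where
  "N q = card {p. prime p \<and> p \<le> q \<and> splits_in_quadratic_field (- int q) p}"

end

theory Submission
  imports Defs "HOL-Analysis.Complex_Transcendental"
begin

lemma ln_decomp:
  fixes n Q :: nat
  assumes "0 < n" "n \<le> Q"
  shows "ln (real n) = (\<Sum>p\<in>{p. prime p \<and> p \<le> Q}. real (multiplicity p n) * ln (real p))"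
proof -
  have "real n = real (\<Prod>p \<in> prime_factors n. p ^ multiplicity p n)"
    using prime_factorization_nat[OF assms(1)] by simp
  also have "\<dots> = (\<Prod>p \<in> prime_factors n. real p ^ multiplicity p n)"
    by simp
  finally have eq: "real n = (\<Prod>p \<in> prime_factors n. real p ^ multiplicity p n)" .
  have "ln (real n) = (\<Sum>p \<in> prime_factors n. ln (real p ^ multiplicity p n))"
    unfolding eq by (subst ln_prod) (auto dest: in_prime_factors_imp_prime prime_gt_0_nat)
  also have "\<dots> = (\<Sum>p \<in> prime_factors n. real (multiplicity p n) * ln (real p))"
    by (simp add: ln_realpow)
  also have "\<dots> = (\<Sum>p\<in>{p. prime p \<and> p \<le> Q}. real (multiplicity p n) * ln (real p))"
  proof (rule sum.mono_neutral_left)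
    show "finite {p. prime p \<and> p \<le> Q}" by simp
    show "prime_factors n \<subseteq> {p. prime p \<and> p \<le> Q}"
      using assms by (auto simp: in_prime_factors_iff) (meson dvd_imp_le le_trans)
    show "\<forall>i\<in>{p. prime p \<and> p \<le> Q} - prime_factors n. real (multiplicity i n) * ln (real i) = 0"
      using assms by (auto simp: prime_factors_multiplicity)
  qed
  finally show ?thesis .
qed

lemma mult_lt:
  fixes p n :: nat
  assumes "prime p" "0 < n"
  shows "multiplicity p n < n"
proof -
  have "p ^ multiplicity p n dvd n" by (rule multiplicity_dvd)
  then have "p ^ multiplicity p n \<le> n" using assms(2) by (rule dvd_imp_le)
  moreover have "multiplicity p n < 2 ^ multiplicity p n" by (rule less_exp)
  moreover have "2 ^ multiplicity p n \<le> p ^ multiplicity p n"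
    using prime_ge_2_nat[OF assms(1)] by (simp add: power_mono)
  ultimately show ?thesis by linarith
qed

lemma mult_card:
  fixes p n B :: nat
  assumes "prime p" "0 < n" "n \<le> B"
  shows "multiplicity p n = card {k\<in>{1..B}. p ^ k dvd n}"
proof -
  have iff: "p ^ k dvd n \<longleftrightarrow> k \<le> multiplicity p n" for k
    using power_dvd_iff_le_multiplicity[of n p k] assms by (auto simp: prime_nat_iff)
  have "{k\<in>{1..B}. p ^ k dvd n} = {1..multiplicity p n}"
    using mult_lt[OF assms(1,2)] assms
    by (auto simp: iff)
  then show ?thesis by simp
qed


lemma card_swap:
  fixes X K :: "nat set" and P :: "nat \<Rightarrow> nat \<Rightarrow> bool"
  assumes "finite X" "finite K"
  shows "(\<Sum>x\<in>X. card {k\<in>K. P k x}) = (\<Sum>k\<in>K. card {x\<in>X. P k x})"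
proof -
  have c: "card {k\<in>A. Q k} = (\<Sum>k\<in>A. if Q k then 1 else 0)" if "finite A" for A :: "nat set" and Q
    using that by (simp add: sum.inter_filter[symmetric])
  show ?thesis
    using assms by (simp only: c) (rule sum.swap)
qed

lemma residue_card:
  fixes M m :: nat and r :: int
  assumes "0 < m"
  shows "card {y\<in>{1..M}. [int y = r] (mod int m)} \<le> M div m + 1"
proof -
  let ?A = "{y\<in>{1..M}. [int y = r] (mod int m)}"
  have "inj_on (\<lambda>y. y div m) ?A"
  proof
    fix y y' assume y: "y \<in> ?A" and y': "y' \<in> ?A" and d: "y div m = y' div m"
    have "[int y = int y'] (mod int m)" using y y' by (auto simp: cong_def)
    then have "int (y mod m) = int (y' mod m)" by (simp add: cong_def of_nat_mod)
    then have "y mod m = y' mod m" by simp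
    then show "y = y'" using d by (metis div_mult_mod_eq)
  qed
  moreover have "(\<lambda>y. y div m) ` ?A \<subseteq> {0..M div m}"
    by (auto intro: div_le_mono)
  ultimately have "card ?A \<le> card {0..M div m}"
    by (metis (no_types, lifting) card_inj_on_le finite_atLeastAtMost)
  then show ?thesis by simp
qed

lemma multiples_card:
  fixes M m :: nat
  assumes "0 < m"
  shows "M div m \<le> card {y\<in>{1..M}. m dvd y}"
proof -
  have sub: "(\<lambda>j. m * j) ` {1..M div m} \<subseteq> {y\<in>{1..M}. m dvd y}"
  proof
    fix y assume "y \<in> (\<lambda>j. m * j) ` {1..M div m}"
    then obtain j where j: "1 \<le> j" "j \<le> M div m" "y = m * j" by auto
    have "m * j \<le> m * (M div m)" using j by simp
    also have "\<dots> \<le> M" by simp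
    finally show "y \<in> {y\<in>{1..M}. m dvd y}" using j assms by auto
  qed
  have inj: "inj_on (\<lambda>j. m * j) {1..M div m}" using assms by (auto simp: inj_on_def)
  have "card {1..M div m} \<le> card {y\<in>{1..M}. m dvd y}"
    using card_inj_on_le[OF inj sub] by simp
  then show ?thesis by simp
qed

lemma prime_power_dvd_split:
  fixes p k :: nat and a b :: int
  assumes "prime p" "int p ^ k dvd a * b" "\<not> (int p dvd a \<and> int p dvd b)"
  shows "int p ^ k dvd a \<or> int p ^ k dvd b"
proof -
  have pp: "prime (int p)" using assms(1) by simp
  show ?thesis
  proof (cases "int p dvd a")
    case True
    then have "\<not> int p dvd b" using assms(3) by simp
    then have "coprime (int p ^ k) b" using pp
      by (simp add: prime_imp_coprime coprime_power_left_iff)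
    then have "int p ^ k dvd a" using assms(2)
      by (metis coprime_dvd_mult_left_iff)
    then show ?thesis by simp
  next
    case False
    then have "coprime (int p ^ k) a" using pp
      by (simp add: prime_imp_coprime coprime_power_left_iff)
    then have "int p ^ k dvd b" using assms(2)
      by (metis coprime_dvd_mult_right_iff)
    then show ?thesis by simp
  qed
qed


lemma root_card:
  fixes p k M a :: nat
  assumes p: "prime p"
  and nd: "\<And>x. x \<in> {1..M} \<Longrightarrow> p dvd (x*(x-1)+a) \<Longrightarrow> \<not> int p dvd (2*int x - 1)"
  shows "card {x\<in>{1..M}. p^k dvd (x*(x-1)+a)} \<le> 2 * card {x\<in>{1..M}. p^k dvd x} + 2"
proof (cases "k = 0")
  case True
  then show ?thesis by simp
next
  assume knz: "k \<noteq> 0"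
  let ?S = "{x\<in>{1..M}. p^k dvd (x*(x-1)+a)}"
  have pk: "0 < p^k" using p by (simp add: prime_gt_0_nat)
  show ?thesis
  proof (cases "?S = {}")
    case True
    then show ?thesis by (simp only: True card.empty)
  next
    case False
    then obtain x0 where x0: "x0 \<in> ?S" by blast
    let ?A = "{y\<in>{1..M}. [int y = int x0] (mod int (p^k))}"
    let ?B = "{y\<in>{1..M}. [int y = 1 - int x0] (mod int (p^k))}"
    have sub: "?S \<subseteq> ?A \<union> ?B"
    proof
      fix y assume y: "y \<in> ?S"
      have y1: "1 \<le> y" "y \<le> M" and x01: "1 \<le> x0" "x0 \<le> M" using y x0 by auto
      have e: "int (y*(y-1)+a) - int (x0*(x0-1)+a) = (int y - int x0) * (int y + int x0 - 1)"
      proof -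
        have iy: "int (y - 1) = int y - 1" using y1 by simp
        have ix: "int (x0 - 1) = int x0 - 1" using x01 by simp
        have "int (y*(y-1)+a) = int y * (int y - 1) + int a" by (simp only: of_nat_add of_nat_mult iy)
        moreover have "int (x0*(x0-1)+a) = int x0 * (int x0 - 1) + int a" by (simp only: of_nat_add of_nat_mult ix)
        ultimately show ?thesis by (simp add: algebra_simps)
      qed
      have "p ^ k dvd (y*(y-1)+a)" using y by simp
      then have d1: "int p ^ k dvd int (y*(y-1)+a)" by (metis int_dvd_int_iff of_nat_power)
      have "p ^ k dvd (x0*(x0-1)+a)" using x0 by simp
      then have d2: "int p ^ k dvd int (x0*(x0-1)+a)" by (metis int_dvd_int_iff of_nat_power)
      have "int p ^ k dvd (int y - int x0) * (int y + int x0 - 1)"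
        using dvd_diff[OF d1 d2] e by simp
      moreover have "\<not> (int p dvd (int y - int x0) \<and> int p dvd (int y + int x0 - 1))"
      proof
        assume h: "int p dvd (int y - int x0) \<and> int p dvd (int y + int x0 - 1)"
        then have "int p dvd ((int y - int x0) + (int y + int x0 - 1))" by (intro dvd_add) auto
        moreover have "(int y - int x0) + (int y + int x0 - 1) = 2 * int y - 1" by simp
        ultimately have "int p dvd (2 * int y - 1)" by metis
        moreover have "p dvd (y*(y-1)+a)"
        proof -
          have "p dvd p ^ k" using knz by (simp add: dvd_power)
          moreover have "p ^ k dvd (y*(y-1)+a)" using y by simp
          ultimately show ?thesis by (rule dvd_trans)
        qed
        ultimately show False using nd[of y] y1 by auto
      qed
      ultimately have "int p ^ k dvd (int y - int x0) \<or> int p ^ k dvd (int y + int x0 - 1)"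
        using prime_power_dvd_split[OF p] by blast
      then show "y \<in> ?A \<union> ?B"
      proof
        assume "int p ^ k dvd (int y - int x0)"
        then have "[int y = int x0] (mod int (p^k))" by (simp add: cong_iff_dvd_diff)
        then show ?thesis using y1 by simp
      next
        assume h: "int p ^ k dvd (int y + int x0 - 1)"
        have eq: "int y - (1 - int x0) = int y + int x0 - 1" by simp
        have h2: "int p ^ k dvd int y - (1 - int x0)" by (subst eq) (rule h)
        have "[int y = 1 - int x0] (mod int (p^k))" unfolding cong_iff_dvd_diff of_nat_power by (rule h2)
        then show ?thesis using y1 by simp
      qed
    qed
    have "card ?S \<le> card (?A \<union> ?B)" using sub by (intro card_mono) auto
    also have "\<dots> \<le> card ?A + card ?B" by (rule card_Un_le)
    also have "\<dots> \<le> 2 * (M div p^k + 1)"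
      using residue_card[OF pk, of M "int x0"] residue_card[OF pk, of M "1 - int x0"] by simp
    also have "\<dots> \<le> 2 * card {x\<in>{1..M}. p^k dvd x} + 2"
      using multiples_card[OF pk, of M] by simp
    finally show ?thesis .
  qed
qed

lemma K_bound:
  fixes p q :: nat
  assumes "prime p"
  shows "real (card {k\<in>{1..q}. p^k < q}) * ln (real p) \<le> ln (real q)"
proof (cases "{k\<in>{1..q}. p^k < q} = {}")
  case True
  then show ?thesis by (simp only: True card.empty) (cases "q = 0", auto)
next
  case False
  let ?S = "{k\<in>{1..q}. p^k < q}"
  have fin: "finite ?S" by simp
  define k0 where "k0 = Max ?S"
  have k0S: "k0 \<in> ?S" unfolding k0_def using fin False by (rule Max_in)
  have "?S \<subseteq> {1..k0}" unfolding k0_def using fin by (auto intro: Max_ge)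
  then have "card ?S \<le> k0" using card_mono[of "{1..k0}" ?S] by simp
  then have "real (card ?S) * ln (real p) \<le> real k0 * ln (real p)"
    using assms prime_ge_1_nat[OF assms] by (intro mult_right_mono) auto
  also have "\<dots> = ln (real p ^ k0)" by (simp add: ln_realpow)
  also have "\<dots> \<le> ln (real q)"
    using k0S assms by (subst ln_le_cancel_iff) (auto simp: prime_gt_0_nat simp flip: of_nat_power)
  finally show ?thesis .
qed

lemma ln_fact_bound:
  fixes M :: nat
  assumes "1 \<le> M"
  shows "(\<Sum>x\<in>{1..M}. ln (real x)) \<le> (real M + 1) * ln (real M) - real M + 1"
  using assms
proof (induction M rule: dec_induct)
  case base
  then show ?case by simp
next
  case (step n)
  have n1: "1 \<le> n" using step by simp
  have "ln (real n / (real n + 1)) \<le> real n / (real n + 1) - 1"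
    using n1 by (intro ln_le_minus_one) auto
  also have "\<dots> = - 1 / (real n + 1)" using n1 by (simp add: field_simps)
  finally have "ln (real n) - ln (real n + 1) \<le> - 1 / (real n + 1)"
    using n1 by (simp add: ln_div)
  then have key: "1 \<le> (real n + 1) * (ln (real n + 1) - ln (real n))"
    using n1 by (simp add: field_simps)
  have "(\<Sum>x\<in>{1..Suc n}. ln (real x)) = (\<Sum>x\<in>{1..n}. ln (real x)) + ln (real n + 1)"
    by (simp add: add.commute)
  also have "\<dots> \<le> (real n + 1) * ln (real n) - real n + 1 + ln (real n + 1)"
    using step by simp
  also have "\<dots> \<le> (real (Suc n) + 1) * ln (real (Suc n)) - real (Suc n) + 1"
    using key by (simp add: algebra_simps)
  finally show ?case .
qed


lemma omega_eq:
  fixes q a :: nat and y :: int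
  assumes "q mod 4 = 3" "4*a = q+1"
  shows "omega_minpoly (- int q) y = y^2 - y + int a"
proof -
  have "(- int q) mod 4 = 1" using assms(1) by presburger
  moreover have "(1 - (- int q)) div 4 = int a" using assms(2) by presburger
  ultimately show ?thesis by (simp add: omega_minpoly_def)
qed

lemma split_lemma:
  fixes q a p x :: nat
  assumes q: "prime q" and q4: "q mod 4 = 3" and a: "4*a = q+1"
    and p: "prime p" and pq: "p < q" and x1: "1 \<le> x" and d: "p dvd x*(x-1)+a"
  shows "splits_in_quadratic_field (- int q) p \<and> \<not> int p dvd (2*int x - 1)"
proof -
  have ix: "int (x - 1) = int x - 1" using x1 by simp
  have F: "int (x*(x-1)+a) = int x * (int x - 1) + int a" by (simp only: of_nat_add of_nat_mult ix)
  have id4: "4 * int (x*(x-1)+a) = (2*int x - 1)^2 + int q"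
    using F a by (simp add: power2_eq_square algebra_simps)
  have dF: "int p dvd int (x*(x-1)+a)" using d by (simp only: int_dvd_int_iff)
  have nd: "\<not> int p dvd (2*int x - 1)"
  proof
    assume h: "int p dvd (2*int x - 1)"
    then have h1: "int p dvd (2*int x - 1)^2" by (simp add: power2_eq_square)
    have h2: "int p dvd 4 * int (x*(x-1)+a)" using dF by (rule dvd_mult)
    have "int p dvd (4 * int (x*(x-1)+a) - (2*int x - 1)^2)" using dvd_diff[OF h2 h1] .
    then have "int p dvd int q" using id4 by simp
    then have "p dvd q" by (simp only: int_dvd_int_iff)
    then have "p = 1 \<or> p = q" using q by (simp add: prime_nat_iff)
    then show False using p pq by auto
  qed
  have om: "omega_minpoly (- int q) y = y^2 - y + int a" for y using omega_eq[OF q4 a] .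
  have v1: "omega_minpoly (- int q) (int x) = int (x*(x-1)+a)"
    unfolding om F by (simp add: power2_eq_square algebra_simps)
  have v2: "omega_minpoly (- int q) (1 - int x) = int (x*(x-1)+a)"
    unfolding om F by (simp add: power2_eq_square algebra_simps)
  have "\<not> [int x = 1 - int x] (mod int p)"
  proof
    assume "[int x = 1 - int x] (mod int p)"
    then have "int p dvd int x - (1 - int x)" by (simp add: cong_iff_dvd_diff)
    moreover have "int x - (1 - int x) = 2 * int x - 1" by simp
    ultimately show False using nd by simp
  qed
  moreover have "[omega_minpoly (- int q) (int x) = 0] (mod int p)"
    unfolding v1 using dF by (simp add: cong_0_iff)
  moreover have "[omega_minpoly (- int q) (1 - int x) = 0] (mod int p)"
    unfolding v2 using dF by (simp add: cong_0_iff)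
  ultimately have "splits_in_quadratic_field (- int q) p"
    unfolding splits_in_quadratic_field_def using p by blast
  with nd show ?thesis by blast
qed

lemma ln2_gt: "2/3 < ln (2::real)"
proof -
  have e: "exp 1 < (272/100::real)" by (rule e_less_272)
  have "exp (2::real) = exp 1 * exp 1" by (simp flip: exp_add)
  also have "\<dots> < 272/100 * (272/100)" using e by (intro mult_strict_mono) auto
  also have "\<dots> < (8::real)" by simp
  finally have "exp 2 < (8::real)" .
  then have "ln (exp 2) < ln (8::real)" by (subst ln_less_cancel_iff) auto
  then have "2 < ln (8::real)" by simp
  also have "ln (8::real) = 3 * ln 2"
    using ln_realpow[of 2 3] by simp
  finally show ?thesis by simp
qed

lemma ln3_gt: "1 < ln (3::real)"
proof -
  have "exp 1 < (3::real)" using e_less_272 by simp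
  then have "ln (exp 1) < ln (3::real)" by (subst ln_less_cancel_iff) auto
  then show ?thesis by simp
qed


lemma sum_if_const:
  fixes K S :: "nat set" and c :: real
  assumes "finite K" "S \<subseteq> K"
  shows "(\<Sum>p\<in>K. if p \<in> S then c else 0) = c * real (card S)"
proof -
  have "(\<Sum>p\<in>K. if p \<in> S then c else 0) = (\<Sum>p\<in>{p\<in>K. p \<in> S}. c)"
    using sum.inter_filter[OF assms(1), of "\<lambda>_. c" "\<lambda>p. p \<in> S"] by simp
  also have "{p\<in>K. p \<in> S} = S" using assms(2) by auto
  finally show ?thesis by simp
qed

lemma sum_if_const_nat:
  fixes K :: "nat set" and P :: "nat \<Rightarrow> bool"
  assumes "finite K"
  shows "(\<Sum>k\<in>K. if P k then (2::nat) else 0) = 2 * card {k\<in>K. P k}"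
proof -
  have "(\<Sum>k\<in>K. if P k then (2::nat) else 0) = (\<Sum>k\<in>{k\<in>K. P k}. 2)"
    using sum.inter_filter[OF assms(1), of "\<lambda>_. (2::nat)" P] by simp
  then show ?thesis by simp
qed


lemma big_arith:
  fixes m n Lq la :: real
  assumes m26: "26 \<le> m" and ma: "2 * ln m - ln 3 < la"
    and L: "m * la \<le> 2 * ((m + 1) * ln m - m + 1) + 2 * Lq * n"
  shows "(2 - ln 3 - ln 2 / 2) * m < 2 * n * Lq"
proof -
  have l2: "2/3 < ln (2::real)" by (rule ln2_gt)
  have "m * (2 * ln m - ln 3) < m * la" using ma m26 by simp
  with L have H: "m * (2 * ln m - ln 3) < 2 * ((m + 1) * ln m - m + 1) + 2 * Lq * n" by linarith
  have e1: "m * (2 * ln m - ln 3) = 2 * (m * ln m) - m * ln 3" by (simp add: algebra_simps)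
  have e2: "2 * ((m + 1) * ln m - m + 1) + 2 * Lq * n = 2 * (m * ln m) + 2 * ln m - 2 * m + 2 + 2 * (n * Lq)"
    by (simp add: algebra_simps)
  have e3: "(2 - ln 3 - ln 2 / 2) * m = 2 * m - m * ln 3 - (m * ln 2) / 2" by (simp add: algebra_simps)
  have e4: "2 * n * Lq = 2 * (n * Lq)" by simp
  have "ln (m / 16) \<le> m / 16 - 1" using m26 by (intro ln_le_minus_one) auto
  moreover have "ln (m / 16) = ln m - 4 * ln 2"
  proof -
    have "ln (16::real) = 4 * ln 2" using ln_realpow[of 2 4] by simp
    then show ?thesis using m26 by (simp add: ln_div)
  qed
  ultimately have lnm: "ln m \<le> m / 16 - 1 + 4 * ln 2" by simp
  have "(m - 16) * (2/3) \<le> (m - 16) * ln 2" using l2 m26 by (intro mult_left_mono) auto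
  moreover have "(m - 16) * ln 2 = m * ln 2 - 16 * ln 2" by (simp add: algebra_simps)
  moreover have "(m - 16) * (2/3) = 2/3 * m - 32/3" by (simp add: algebra_simps)
  ultimately have key: "m * ln 2 \<ge> 4 * ln m + 4" using lnm m26 by linarith
  have H2: "2 * (m * ln m) - m * ln 3 < 2 * (m * ln m) + 2 * ln m - 2 * m + 2 + 2 * (n * Lq)"
    using H unfolding e1 e2 .
  show ?thesis unfolding e3 e4 using H2 key by linarith
qed

lemma small_arith:
  fixes m n Lq :: real
  assumes n2: "2 \<le> n" and m0: "0 \<le> m" and c: "(m \<le> 23 \<and> 6 * ln 2 \<le> Lq) \<or> (m \<le> 25 \<and> 9 * ln 2 \<le> Lq)"
  shows "(2 - ln 3 - ln 2 / 2) * m < 2 * n * Lq"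
proof -
  have l2: "2/3 < ln (2::real)" by (rule ln2_gt)
  have l3: "1 < ln (3::real)" by (rule ln3_gt)
  have c23: "2 - ln 3 - ln 2 / 2 < (2/3::real)" using l2 l3 by linarith
  have "(2 - ln 3 - ln 2 / 2) * m \<le> (2/3) * m" using c23 m0 by (intro mult_right_mono) auto
  also have "\<dots> < 4 * Lq" using c l2 by linarith
  also have "\<dots> \<le> 2 * n * Lq"
  proof -
    have "0 \<le> Lq" using c l2 by linarith
    then have "2 * Lq \<le> n * Lq" using n2 by (intro mult_right_mono) auto
    then show ?thesis by (simp add: mult.commute)
  qed
  finally show ?thesis .
qed

theorem theorem1p2:
  fixes q :: nat
  assumes "prime q" and "q \<ge> 67" and "q mod 16 = 3"
  shows "real (N q) > (2 - ln (3 * sqrt 2)) / 2 * (real_of_int \<lfloor>sqrt (3 * real q / 4)\<rfloor> / ln (real q))"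
proof -
  note q = assms(1)
  define a where "a = (q + 1) div 4"
  have a4: "4*a = q+1" unfolding a_def using assms(3) by presburger
  have q4: "q mod 4 = 3" using assms(3) by presburger
  have aodd: "odd a" unfolding a_def using assms(3) by presburger
  have a17: "a \<ge> 17" using a4 assms(2) by linarith
  define F where "F x = x*(x-1)+a" for x :: nat
  define S where "S = {p. prime p \<and> p \<le> q \<and> splits_in_quadratic_field (- int q) p}"
  define Pq where "Pq = {p. prime p \<and> p \<le> q}"
  have NS: "N q = card S" unfolding N_def S_def by simp
  have finPq: "finite Pq" unfolding Pq_def by simp
  have SPq: "S \<subseteq> Pq" unfolding S_def Pq_def by auto
  have finS: "finite S" using finite_subset[OF SPq finPq] .
  have splitF: "splits_in_quadratic_field (- int q) p \<and> \<not> int p dvd (2*int x - 1)"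
    if "prime p" "p < q" "1 \<le> x" "p dvd F x" for p x
    using split_lemma[OF q q4 a4 that(1,2,3)] that(4) unfolding F_def by simp
  define s where "s = sqrt (3 * real q / 4)"
  define M where "M = nat \<lfloor>s\<rfloor>"
  have s1: "1 \<le> s" unfolding s_def using assms(2) by simp
  have fl: "real_of_int \<lfloor>s\<rfloor> = real M" unfolding M_def using s1 by simp
  have M1: "1 \<le> M" unfolding M_def using s1 by linarith
  have Ms: "real M \<le> s" using fl by (metis of_int_floor_le)
  have "real M ^ 2 \<le> s ^ 2" using Ms by (intro power_mono) auto
  also have "s ^ 2 = 3 * real q / 4" unfolding s_def by simp
  finally have "real (4 * M^2) \<le> real (3 * q)" by simp
  then have M2: "4 * M^2 \<le> 3 * q" by (simp only: of_nat_le_iff)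
  have "M \<le> M^2" using le_square[of M] by (simp add: power2_eq_square)
  then have Mq: "M < q" using M2 assms(2) by linarith
  have Fpos: "0 < F x" for x unfolding F_def using a17 by simp
  have Fq: "F x < q" if "x \<in> {1..M}" for x
  proof -
    have "x*(x-1) \<le> M*(M-1)" using that by (intro mult_le_mono) auto
    moreover have "M*(M-1) + M = M*M" using M1 by (cases M) auto
    ultimately show ?thesis unfolding F_def using M2 a4 M1 by (simp add: power2_eq_square)
  qed
  define A where "A p = (\<Sum>x\<in>{1..M}. multiplicity p (F x))" for p
  define B where "B p = (\<Sum>x\<in>{1..M}. multiplicity p x)" for p
  have L1: "(\<Sum>x\<in>{1..M}. ln (real (F x))) = (\<Sum>p\<in>Pq. real (A p) * ln (real p))"
  proof -
    have "(\<Sum>x\<in>{1..M}. ln (real (F x))) = (\<Sum>x\<in>{1..M}. \<Sum>p\<in>Pq. real (multiplicity p (F x)) * ln (real p))"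
    proof (rule sum.cong[OF refl])
      fix x assume x: "x \<in> {1..M}"
      show "ln (real (F x)) = (\<Sum>p\<in>Pq. real (multiplicity p (F x)) * ln (real p))"
        unfolding Pq_def using Fpos[of x] Fq[OF x] by (intro ln_decomp) auto
    qed
    also have "\<dots> = (\<Sum>p\<in>Pq. \<Sum>x\<in>{1..M}. real (multiplicity p (F x)) * ln (real p))"
      by (rule sum.swap)
    also have "\<dots> = (\<Sum>p\<in>Pq. real (A p) * ln (real p))"
      unfolding A_def by (simp add: sum_distrib_right)
    finally show ?thesis .
  qed
  have L2: "(\<Sum>x\<in>{1..M}. ln (real x)) = (\<Sum>p\<in>Pq. real (B p) * ln (real p))"
  proof -
    have "(\<Sum>x\<in>{1..M}. ln (real x)) = (\<Sum>x\<in>{1..M}. \<Sum>p\<in>Pq. real (multiplicity p x) * ln (real p))"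
    proof (rule sum.cong[OF refl])
      fix x assume x: "x \<in> {1..M}"
      show "ln (real x) = (\<Sum>p\<in>Pq. real (multiplicity p x) * ln (real p))"
        unfolding Pq_def using x Mq by (intro ln_decomp) auto
    qed
    also have "\<dots> = (\<Sum>p\<in>Pq. \<Sum>x\<in>{1..M}. real (multiplicity p x) * ln (real p))"
      by (rule sum.swap)
    also have "\<dots> = (\<Sum>p\<in>Pq. real (B p) * ln (real p))"
      unfolding B_def by (simp add: sum_distrib_right)
    finally show ?thesis .
  qed
  have L3: "real (A p) * ln (real p) \<le> 2 * (real (B p) * ln (real p)) + (if p \<in> S then 2 * ln (real q) else 0)"
    if pP: "p \<in> Pq" for p
  proof -
    have pp: "prime p" using pP unfolding Pq_def by simp
    have lnp: "0 \<le> ln (real p)" using prime_ge_1_nat[OF pp] by simp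
    show ?thesis
    proof (cases "p \<in> S")
      case False
      have "multiplicity p (F x) = 0" if x: "x \<in> {1..M}" for x
      proof (rule not_dvd_imp_multiplicity_0, rule notI)
        assume d: "p dvd F x"
        have "p \<le> F x" using d Fpos by (rule dvd_imp_le)
        then have "p < q" using Fq[OF x] by simp
        then have "splits_in_quadratic_field (- int q) p" using splitF[OF pp _ _ d] x by auto
        then show False using False pp \<open>p < q\<close> unfolding S_def by simp
      qed
      then have "A p = 0" unfolding A_def by (intro sum.neutral ballI)
      then show ?thesis using False lnp by simp
    next
      case True
      define K where "K = {k\<in>{1..q}. p^k < q}"
      have nd: "\<not> int p dvd (2*int x - 1)" if "x \<in> {1..M}" "p dvd (x*(x-1)+a)" for x
      proof -
        have "p dvd F x" using that(2) unfolding F_def .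
        then have "p \<le> F x" using Fpos[of x] by (rule dvd_imp_le)
        then have "p < q" using Fq[OF that(1)] by simp
        then show ?thesis using splitF[OF pp] that unfolding F_def by auto
      qed
      have Bp: "(\<Sum>k\<in>{1..q}. card {x\<in>{1..M}. p^k dvd x}) = B p"
      proof -
        have "B p = (\<Sum>x\<in>{1..M}. card {k\<in>{1..q}. p^k dvd x})"
          unfolding B_def
        proof (rule sum.cong[OF refl])
          fix x assume x: "x \<in> {1..M}"
          show "multiplicity p x = card {k\<in>{1..q}. p^k dvd x}"
            using x Mq by (intro mult_card pp) auto
        qed
        also have "\<dots> = (\<Sum>k\<in>{1..q}. card {x\<in>{1..M}. p^k dvd x})"
          by (rule card_swap) auto
        finally show ?thesis by simp
      qed
      have "A p = (\<Sum>x\<in>{1..M}. card {k\<in>{1..q}. p^k dvd F x})"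
        unfolding A_def
      proof (rule sum.cong[OF refl])
        fix x assume x: "x \<in> {1..M}"
        show "multiplicity p (F x) = card {k\<in>{1..q}. p^k dvd F x}"
          using Fpos[of x] Fq[OF x] by (intro mult_card pp) auto
      qed
      also have "\<dots> = (\<Sum>k\<in>{1..q}. card {x\<in>{1..M}. p^k dvd F x})"
        by (rule card_swap) auto
      also have "\<dots> \<le> (\<Sum>k\<in>{1..q}. 2 * card {x\<in>{1..M}. p^k dvd x} + (if p^k < q then 2 else 0))"
      proof (rule sum_mono)
        fix k assume "k \<in> {1..q}"
        show "card {x\<in>{1..M}. p^k dvd F x} \<le> 2 * card {x\<in>{1..M}. p^k dvd x} + (if p^k < q then 2 else 0)"
        proof (cases "p^k < q")
          case True
          have rc: "card {x\<in>{1..M}. p^k dvd (x*(x-1)+a)} \<le> 2 * card {x\<in>{1..M}. p^k dvd x} + 2"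
            by (rule root_card[OF pp nd])
          have seteq: "{x\<in>{1..M}. p^k dvd F x} = {x\<in>{1..M}. p^k dvd (x*(x-1)+a)}"
            unfolding F_def ..
          show ?thesis unfolding seteq if_P[OF True] by (rule rc)
        next
          case False
          have "{x\<in>{1..M}. p^k dvd F x} = {}"
          proof (rule ccontr)
            assume "{x\<in>{1..M}. p^k dvd F x} \<noteq> {}"
            then obtain x where x: "x \<in> {1..M}" "p^k dvd F x" by auto
            have "p^k \<le> F x" using x(2) Fpos by (rule dvd_imp_le)
            then show False using Fq[OF x(1)] False by simp
          qed
          then have c0: "card {x\<in>{1..M}. p^k dvd F x} = 0" by (simp only: card.empty)
          show ?thesis by (simp only: c0)
        qed
      qed
      also have "\<dots> = 2 * (\<Sum>k\<in>{1..q}. card {x\<in>{1..M}. p^k dvd x}) + 2 * card K"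
        unfolding K_def by (simp only: sum.distrib sum_distrib_left[symmetric] sum_if_const_nat[OF finite_atLeastAtMost])
      also have "\<dots> = 2 * B p + 2 * card K" using Bp by simp
      finally have AB: "A p \<le> 2 * B p + 2 * card K" .
      have "real (A p) * ln (real p) \<le> real (2 * B p + 2 * card K) * ln (real p)"
        using AB lnp by (intro mult_right_mono) auto
      also have "\<dots> = 2 * (real (B p) * ln (real p)) + 2 * (real (card K) * ln (real p))"
        by (simp add: algebra_simps)
      also have "\<dots> \<le> 2 * (real (B p) * ln (real p)) + 2 * ln (real q)"
        using K_bound[OF pp, of q] unfolding K_def by simp
      finally show ?thesis using True by simp
    qed
  qed
  have L4: "(\<Sum>x\<in>{1..M}. ln (real (F x))) \<le> 2 * (\<Sum>x\<in>{1..M}. ln (real x)) + 2 * ln (real q) * real (N q)"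
  proof -
    have "(\<Sum>x\<in>{1..M}. ln (real (F x))) \<le> (\<Sum>p\<in>Pq. 2 * (real (B p) * ln (real p)) + (if p \<in> S then 2 * ln (real q) else 0))"
      unfolding L1 using L3 by (rule sum_mono)
    also have "\<dots> = 2 * (\<Sum>p\<in>Pq. real (B p) * ln (real p)) + 2 * ln (real q) * real (card S)"
      by (simp add: sum.distrib sum_distrib_left sum_if_const[OF finPq SPq])
    finally show ?thesis unfolding L2 NS .
  qed
  have L5: "real M * ln (real a) \<le> (\<Sum>x\<in>{1..M}. ln (real (F x)))"
  proof -
    have "(\<Sum>x\<in>{1..M}. ln (real a)) \<le> (\<Sum>x\<in>{1..M}. ln (real (F x)))"
    proof (rule sum_mono)
      fix x assume "x \<in> {1..M}"
      have "a \<le> F x" unfolding F_def by simp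
      then show "ln (real a) \<le> ln (real (F x))" using a17 by simp
    qed
    then show ?thesis by simp
  qed
  have Lst: "(\<Sum>x\<in>{1..M}. ln (real x)) \<le> (real M + 1) * ln (real M) - real M + 1"
    using ln_fact_bound[OF M1] .
  have l2: "2/3 < ln (2::real)" by (rule ln2_gt)
  have lnc: "ln (3 * sqrt 2) = ln 3 + ln 2 / 2"
    by (simp add: ln_mult ln_sqrt)
  have lq64: "6 * ln 2 \<le> ln (real q)"
  proof -
    have "6 * ln (2::real) = ln (2^6)" using ln_realpow[of 2 6] by simp
    also have "\<dots> \<le> ln (real q)" using assms(2) by (subst ln_le_cancel_iff) auto
    finally show ?thesis .
  qed
  have lqpos: "0 < ln (real q)" using lq64 l2 by linarith
  define m where "m = real M"
  define n where "n = real (N q)"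
  define Lq where "Lq = ln (real q)"
  have goal: "(2 - ln 3 - ln 2 / 2) * m < 2 * n * Lq"
  proof (cases "M \<ge> 26")
    case True
    have m26: "26 \<le> m" unfolding m_def using True by simp
    have "real (4 * M^2) \<le> real (3 * q)" using M2 by (simp only: of_nat_le_iff)
    then have r1: "4 * m^2 \<le> 3 * real q" unfolding m_def by simp
    have r2: "4 * real a = real q + 1" using a4 by (metis of_nat_add of_nat_mult of_nat_numeral of_nat_1)
    have ma: "m^2 / 3 < real a" using r1 r2 by linarith
    have "ln (m^2/3) < ln (real a)" using ma m26 a17 by (subst ln_less_cancel_iff) auto
    moreover have "ln (m^2/3) = 2 * ln m - ln 3"
    proof -
      have "ln (m^2/3) = ln (m^2) - ln 3" using m26 by (intro ln_divide_pos) auto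
      moreover have "ln (m^2) = 2 * ln m" using ln_realpow[of m 2] by simp
      ultimately show ?thesis by simp
    qed
    ultimately have lna: "2 * ln m - ln 3 < ln (real a)" by simp
    have "real M * ln (real a) \<le> (\<Sum>x\<in>{1..M}. ln (real (F x)))" by (rule L5)
    also have "\<dots> \<le> 2 * (\<Sum>x\<in>{1..M}. ln (real x)) + 2 * ln (real q) * real (N q)" by (rule L4)
    also have "\<dots> \<le> 2 * ((real M + 1) * ln (real M) - real M + 1) + 2 * ln (real q) * real (N q)"
      using Lst by simp
    finally have "m * ln (real a) \<le> 2 * ((m + 1) * ln m - m + 1) + 2 * Lq * n"
      unfolding m_def n_def Lq_def .
    then show ?thesis by (rule big_arith[OF m26 lna])
  next
    case False
    have "2 \<le> N q"
    proof -
      have a1: "a \<noteq> 1" using a17 by simp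
      obtain p1 where p1: "prime p1" "p1 dvd a" using prime_factor_nat[OF a1] by blast
      have a2: "a + 2 \<noteq> 1" by simp
      obtain p2 where p2: "prime p2" "p2 dvd a + 2" using prime_factor_nat[OF a2] by blast
      have ne: "p1 \<noteq> p2"
      proof
        assume "p1 = p2"
        then have "p1 dvd (a + 2) - a" using p1 p2 by (intro dvd_diff_nat) auto
        then have "p1 dvd 2" by simp
        then have "p1 \<le> 2" by (rule dvd_imp_le) simp
        then have "p1 = 2" using prime_ge_2_nat[OF p1(1)] by simp
        then show False using p1(2) aodd by simp
      qed
      have aq: "a + 2 < q" using a4 a17 by linarith
      have p1le: "p1 \<le> a" using p1(2) a17 by (intro dvd_imp_le) auto
      have p2le: "p2 \<le> a + 2" using p2(2) by (intro dvd_imp_le) auto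
      have "F 1 = a" unfolding F_def by simp
      then have "p1 \<in> S"
        using splitF[OF p1(1), of 1] p1 p1le aq unfolding S_def by auto
      moreover have "F 2 = a + 2" unfolding F_def by simp
      then have "p2 \<in> S"
        using splitF[OF p2(1), of 2] p2 p2le aq unfolding S_def by auto
      ultimately have "{p1, p2} \<subseteq> S" by auto
      then have "card {p1, p2} \<le> card S" using finS by (rule card_mono[rotated])
      then show ?thesis using ne NS by simp
    qed
    then have n2: "2 \<le> n" unfolding n_def by simp
    have m0: "0 \<le> m" unfolding m_def by simp
    have c: "(m \<le> 23 \<and> 6 * ln 2 \<le> Lq) \<or> (m \<le> 25 \<and> 9 * ln 2 \<le> Lq)"
    proof (cases "M \<le> 23")
      case True
      then show ?thesis using lq64 unfolding m_def Lq_def by simp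
    next
      case F23: False
      then have M24: "24 \<le> M" by simp
      have "24 * 24 \<le> M * M" using mult_le_mono[OF M24 M24] .
      then have "512 \<le> q" using M2 by (simp add: power2_eq_square)
      have "9 * ln (2::real) = ln (2^9)" using ln_realpow[of 2 9] by simp
      also have "\<dots> \<le> ln (real q)" using \<open>512 \<le> q\<close> by (subst ln_le_cancel_iff) auto
      finally have "9 * ln 2 \<le> Lq" unfolding Lq_def .
      moreover have "m \<le> 25" unfolding m_def using False by simp
      ultimately show ?thesis by simp
    qed
    show ?thesis using small_arith[OF n2 m0 c] .
  qed
  have "(2 - ln (3 * sqrt 2)) / 2 * (real_of_int \<lfloor>sqrt (3 * real q / 4)\<rfloor> / ln (real q))
        = (2 - ln 3 - ln 2 / 2) * m / (2 * Lq)"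
    using fl unfolding lnc m_def Lq_def s_def by simp
  also have "\<dots> < n"
  proof -
    have "(2 - ln 3 - ln 2 / 2) * m < n * (2 * Lq)" using goal by (simp add: mult.assoc mult.commute mult.left_commute)
    then show ?thesis using lqpos unfolding Lq_def by (subst pos_divide_less_eq) auto
  qed
  finally show ?thesis unfolding n_def .
qed

end
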